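(* Let $M\ge 2$ be an integer. (Downlink) If $0<P<P_{\mathrm{cross,DL}}:=\frac{4}{M-1}$, then for every integer $K$ with $2\le K\le M$, $$K\log_2\!\left(1+\frac{P(M+1)}{P(K-1)+K}\right)> K\log_2\!\left(1+\frac{P(M-K+1)}{K}\right).$$ (Uplink) If $0<P_u<P_{\mathrm{cross,UL}}:=\frac{1}{M-1}$, then for every integer $K$ with $2\le K\le M$, $$K\log_2\!\left(1+\frac{P_uM}{P_u(K-1)+1}\right)> K\log_2\!\left(1+P_u(M-K+1)\right).$$
   Context: The left-hand sides are the paper's closed-form low-SNR ergodic sum-rate expressions for maximum ratio transmission with matrix normalization (downlink, total power $P$) and maximum ratio combining (uplink, per-user power $P_u$), and the right-hand sides are those for zero-forcing with vector normalization (downlink) and zero-forcing reception (uplink), for $M$ base-station antennas and $K$ single-antenna users. The lemma states that below the power cross point, MRT/MRC is better than ZF regardless of the number of active users. *)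

theory Defs
  imports Complex_Main
begin

end

theory Submission
  imports Defs
begin

lemma dl:
  fixes m k P :: real
  assumes "2 \<le> k" "k \<le> m" "0 < P" "P < 4 / (m - 1)"
  shows "P * (m - k + 1) / k < P * (m + 1) / (P * (k - 1) + k)"
proof -
  have m1: "m - 1 > 0" using assms by simp
  have "P * (m - 1) < 4" using assms m1 by (simp add: field_simps)
  have sq: "(k-2)*(k-2) \<ge> 0" by simp
  have a: "4 * (k - 1) \<le> k * k" using sq by (simp add: algebra_simps)
  have b: "(k-1) * (m - k + 1) \<le> (k-1)*(m-1)" using assms by (intro mult_left_mono) auto
  have "P * ((k-1) * (m - k + 1)) \<le> P * ((k-1)*(m-1))" using b assms by simp
  also have "\<dots> = (k-1) * (P*(m-1))" by simp
  also have "\<dots> < (k-1) * 4" using \<open>P * (m - 1) < 4\<close> assms by (intro mult_strict_left_mono) auto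
  finally have c: "P * ((k-1) * (m - k + 1)) < k*k" using a by simp
  have d: "P * (k - 1) + k > 0" using assms by (smt (verit) mult_nonneg_nonneg)
  have key: "P * (P * ((k-1) * (m - k + 1))) < P * (k*k)" using c assms by simp
  have poly: "P * (m - k + 1) * (P * (k - 1) + k) < P * (m + 1) * k"
    using key by (simp add: algebra_simps)
  have "P * (m - k + 1) / k = P * (m - k + 1) * (P * (k - 1) + k) / (k * (P * (k - 1) + k))"
    using d assms by simp
  also have "\<dots> < P * (m + 1) * k / (k * (P * (k - 1) + k))"
    using poly d assms by (intro divide_strict_right_mono) auto
  also have "\<dots> = P * (m + 1) / (P * (k - 1) + k)" using d assms by simp
  finally show ?thesis .
qed

lemma ul:
  fixes m k P :: real
  assumes "2 \<le> k" "k \<le> m" "0 < P" "P < 1 / (m - 1)"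
  shows "P * (m - k + 1) < P * m / (P * (k - 1) + 1)"
proof -
  have m1: "m - 1 > 0" using assms by simp
  have "P * (m - 1) < 1" using assms m1 by (simp add: field_simps)
  have "P * (m - k + 1) \<le> P * (m-1)" using assms by (intro mult_left_mono) auto
  hence e: "P * (m - k + 1) < 1" using \<open>P * (m - 1) < 1\<close> by simp
  have "(P*(k-1)) * (P * (m - k + 1)) < (P*(k-1)) * 1" using e assms by (intro mult_strict_left_mono) auto
  hence c: "P * (m - k + 1) * (P * (k - 1) + 1) < P * m" by (simp add: algebra_simps)
  have d: "P * (k - 1) + 1 > 0" using assms by (smt (verit) mult_nonneg_nonneg)
  show ?thesis using c d by (simp add: pos_less_divide_eq)
qed

theorem lemma8:
  fixes M :: nat
  assumes "M \<ge> 2"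
  shows "(\<forall>P::real. 0 < P \<and> P < 4 / (real M - 1) \<longrightarrow>
            (\<forall>K::nat. 2 \<le> K \<and> K \<le> M \<longrightarrow>
              real K * log 2 (1 + P * (real M + 1) / (P * (real K - 1) + real K))
              > real K * log 2 (1 + P * (real M - real K + 1) / real K)))
       \<and> (\<forall>Pu::real. 0 < Pu \<and> Pu < 1 / (real M - 1) \<longrightarrow>
            (\<forall>K::nat. 2 \<le> K \<and> K \<le> M \<longrightarrow>
              real K * log 2 (1 + Pu * real M / (Pu * (real K - 1) + 1))
              > real K * log 2 (1 + Pu * (real M - real K + 1))))"
proof (intro conjI allI impI)
  fix P :: real and K :: nat
  assume h: "0 < P \<and> P < 4 / (real M - 1)" "2 \<le> K \<and> K \<le> M"
  have kr: "2 \<le> real K" "real K \<le> real M" using h by auto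
  have l: "P * (real M - real K + 1) / real K < P * (real M + 1) / (P * (real K - 1) + real K)"
    using dl[OF kr] h by auto
  have p: "0 < 1 + P * (real M - real K + 1) / real K" using h kr by (intro add_pos_nonneg) auto
  have "log 2 (1 + P * (real M - real K + 1) / real K) < log 2 (1 + P * (real M + 1) / (P * (real K - 1) + real K))"
    using p l by (subst log_less_cancel_iff) auto
  thus "real K * log 2 (1 + P * (real M + 1) / (P * (real K - 1) + real K))
              > real K * log 2 (1 + P * (real M - real K + 1) / real K)" using kr by simp
next
  fix P :: real and K :: nat
  assume h: "0 < P \<and> P < 1 / (real M - 1)" "2 \<le> K \<and> K \<le> M"
  have kr: "2 \<le> real K" "real K \<le> real M" using h by auto
  have l: "P * (real M - real K + 1) < P * real M / (P * (real K - 1) + 1)"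
    using ul[OF kr] h by auto
  have p: "0 < 1 + P * (real M - real K + 1)" using h kr by (intro add_pos_nonneg) auto
  have "log 2 (1 + P * (real M - real K + 1)) < log 2 (1 + P * real M / (P * (real K - 1) + 1))"
    using p l by (subst log_less_cancel_iff) auto
  thus "real K * log 2 (1 + P * real M / (P * (real K - 1) + 1))
              > real K * log 2 (1 + P * (real M - real K + 1))" using kr by simp
qed

end
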